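(* There exist absolute constants $C,c>0$ such that the following holds. Let $x$ be a random vector in $\{0,1\}^n$ whose coordinates are i.i.d. Bernoulli with parameter $p\in(0,1/2]$, and let $y$ be a random vector in $\{0,1\}^m$, independent of $x$, whose coordinates are i.i.d. Bernoulli with parameter $q\in(0,1)$. Let $(x_k,y_k)$, $k=1,\ldots,K$, be sampled independently from the distribution of $(x,y)$. Let $m_0\ge m$ be such that $Kq\ge C\log m_0$, $np\ge C\log(Km_0)$, and $Kq\log(Km_0)\le cn$. Then, with probability at least $1-3m/m_0$, there exists $F\in\mathcal{T}(n,m)$ such that $F(x_k)=y_k$ for all $k=1,\ldots,K$. Moreover, one may take $F=h(Wx-b)$ with $W:=\sum_{k=1}^K y_k\bar{x}_k^{\mathsf T}$, where $\bar x_k = x_k-\mathbb{E}x_k$, and $b$ any vector (fixed or dependent on the data) whose coordinates all satisfy $\frac{np}{8}<b(i)<\frac{np}{4}$.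
   Context: $\mathcal{T}(n,m)$ is the set of maps $F:\mathbb{R}^n\to\{0,1\}^m$ of the form $F(x)=h(Wx-b)$ with $W$ a real $m\times n$ matrix, $b\in\mathbb{R}^m$, and $h$ the Heaviside function applied componentwise ($h(t)=0$ for $t<0$, $h(t)=1$ for $t>0$). *)

theory Defs
  imports "HOL-Probability.Probability"
begin

text \<open>Heaviside function: only defined off 0 (h(t)=0 for t<0, h(t)=1 for t>0).
  Values in {0,1} are encoded as bool (False = 0, True = 1).\<close>
definition heaviside :: "real \<Rightarrow> bool option" where
  "heaviside t = (if t > 0 then Some True else if t < 0 then Some False else None)"

definition thr_map :: "nat \<Rightarrow> (nat \<Rightarrow> nat \<Rightarrow> real) \<Rightarrow> (nat \<Rightarrow> real) \<Rightarrow> (nat \<Rightarrow> bool) \<Rightarrow> nat \<Rightarrow> bool option" where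
  "thr_map n W b x i = heaviside ((\<Sum>j<n. W i j * of_bool (x j)) - b i)"

definition realizes :: "nat \<Rightarrow> nat \<Rightarrow> nat \<Rightarrow> (nat \<Rightarrow> nat \<Rightarrow> real) \<Rightarrow> (nat \<Rightarrow> real)
    \<Rightarrow> (nat \<Rightarrow> nat \<Rightarrow> bool) \<Rightarrow> (nat \<Rightarrow> nat \<Rightarrow> bool) \<Rightarrow> bool" where
  "realizes n m K W b xs ys \<longleftrightarrow> (\<forall>k<K. \<forall>i<m. thr_map n W b (xs k) i = Some (ys k i))"

definition hebb_W :: "nat \<Rightarrow> real \<Rightarrow> (nat \<Rightarrow> nat \<Rightarrow> bool) \<Rightarrow> (nat \<Rightarrow> nat \<Rightarrow> bool) \<Rightarrow> nat \<Rightarrow> nat \<Rightarrow> real" where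
  "hebb_W K p xs ys i j = (\<Sum>k<K. of_bool (ys k i) * (of_bool (xs k j) - p))"

text \<open>Joint law of the data: X (k,j) = x_k(j) iid Bernoulli(p), Y (k,i) = y_k(i) iid Bernoulli(q),
  all independent.\<close>
definition data_pmf :: "nat \<Rightarrow> nat \<Rightarrow> nat \<Rightarrow> real \<Rightarrow> real \<Rightarrow> ((nat \<times> nat \<Rightarrow> bool) \<times> (nat \<times> nat \<Rightarrow> bool)) pmf" where
  "data_pmf n m K p q = pair_pmf (Pi_pmf ({..<K} \<times> {..<n}) False (\<lambda>_. bernoulli_pmf p))
                                 (Pi_pmf ({..<K} \<times> {..<m}) False (\<lambda>_. bernoulli_pmf q))"

end

theory Submission
  imports Defs
begin

lemma exp_le_quad:
  fixes x :: real assumes "\<bar>x\<bar> \<le> 1" shows "exp x \<le> 1 + x + x\<^sup>2"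
proof (cases "x \<ge> 0")
  case True thus ?thesis using exp_bound assms by auto
next
  case False
  define y where "y = - x"
  have y: "0 \<le> y" "y \<le> 1" using False assms by (auto simp: y_def)
  have e: "1 + y + y\<^sup>2 / 2 \<le> exp y" using exp_lower_Taylor_quadratic y by auto
  have "1 \<le> (1 + y + y\<^sup>2 / 2) * (1 - y + y\<^sup>2)"
  proof -
    have "(1 + y + y\<^sup>2 / 2) * (1 - y + y\<^sup>2) = 1 + y^2/2 + y^3/2 + y^4/2"
      by (simp add: field_simps power2_eq_square power3_eq_cube power4_eq_xxxx)
    thus ?thesis using y by simp
  qed
  also have "\<dots> \<le> exp y * (1 - y + y\<^sup>2)"
    apply (rule mult_right_mono[OF e]) using y zero_le_power2[of y] by linarith
  finally have "1 \<le> exp y * (1 - y + y\<^sup>2)" .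
  hence "exp (-y) \<le> 1 - y + y\<^sup>2" by (simp add: exp_minus field_simps)
  thus ?thesis by (simp add: y_def)
qed

lemma bern_factor:
  fixes r l :: real assumes "0 \<le> r" "r \<le> 1" "\<bar>l\<bar> \<le> 1"
  shows "exp (l * (1 - r)) * r + exp (l * (0 - r)) * (1 - r) \<le> exp (r * l\<^sup>2)"
proof -
  have "exp (l * (1 - r)) * r + exp (l * (0 - r)) * (1 - r) = exp (- l * r) * (1 - r + r * exp l)"
    by (simp add: algebra_simps flip: exp_add)
  also have "1 - r + r * exp l \<le> exp (r * (exp l - 1))"
    using exp_ge_add_one_self[of "r * (exp l - 1)"] by (simp add: algebra_simps)
  hence "exp (- l * r) * (1 - r + r * exp l) \<le> exp (- l * r) * exp (r * (exp l - 1))"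
    by (rule mult_left_mono) simp
  also have "\<dots> = exp (r * (exp l - 1 - l))" by (simp add: algebra_simps flip: exp_add)
  also have "\<dots> \<le> exp (r * l\<^sup>2)"
    using exp_le_quad[OF assms(3)] assms(1) by (simp add: mult_left_mono)
  finally show ?thesis .
qed

lemma mgf_Pi:
  assumes A: "finite A" and T: "T \<subseteq> A" and r: "0 \<le> r" "r \<le> 1" and l: "\<bar>l\<bar> \<le> 1"
  shows "(\<integral>\<^sup>+f. ennreal (exp (l * (\<Sum>t\<in>T. of_bool (f t) - r))) \<partial>Pi_pmf A False (\<lambda>_. bernoulli_pmf r))
         \<le> ennreal (exp (real (card T) * r * l\<^sup>2))"
proof -
  define g where "g = (\<lambda>x b. if x \<in> T then ennreal (exp (l * (of_bool b - r))) else 1)"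
  have fT: "finite T" using A T finite_subset by blast
  have eq: "ennreal (exp (l * (\<Sum>t\<in>T. of_bool (f t) - r))) = (\<Prod>x\<in>A. g x (f x))" for f :: "'a \<Rightarrow> bool"
  proof -
    have "(\<Prod>x\<in>A. g x (f x)) = (\<Prod>x\<in>T. ennreal (exp (l * (of_bool (f x) - r))))"
      unfolding g_def using T by (simp add: prod.inter_filter[OF A, symmetric] Int_absorb1 Collect_conj_eq Int_commute)
    also have "\<dots> = ennreal (\<Prod>x\<in>T. exp (l * (of_bool (f x) - r)))"
      by (rule prod_ennreal) simp
    also have "(\<Prod>x\<in>T. exp (l * (of_bool (f x) - r))) = exp (l * (\<Sum>t\<in>T. of_bool (f t) - r))"
      using fT by (simp add: exp_sum sum_distrib_left)
    finally show ?thesis ..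
  qed
  have "(\<integral>\<^sup>+f. ennreal (exp (l * (\<Sum>t\<in>T. of_bool (f t) - r))) \<partial>Pi_pmf A False (\<lambda>_. bernoulli_pmf r))
      = (\<integral>\<^sup>+f. (\<Prod>x\<in>A. g x (f x)) \<partial>Pi_pmf A False (\<lambda>_. bernoulli_pmf r))"
    by (simp add: eq)
  also have "\<dots> = (\<Prod>x\<in>A. nn_integral (bernoulli_pmf r) (g x))"
    by (rule nn_integral_prod_Pi_pmf[OF A])
  also have "\<dots> \<le> (\<Prod>x\<in>A. if x \<in> T then ennreal (exp (r * l\<^sup>2)) else 1)"
  proof (rule prod_mono_ennreal)
    fix x assume "x \<in> A"
    show "nn_integral (bernoulli_pmf r) (g x) \<le> (if x \<in> T then ennreal (exp (r * l\<^sup>2)) else 1)"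
    proof (cases "x \<in> T")
      case True
      have "nn_integral (bernoulli_pmf r) (g x) = ennreal (exp (l * (1 - r))) * r + ennreal (exp (l * (0 - r))) * (1 - r)"
        using r True by (simp add: g_def)
      also have "\<dots> = ennreal (exp (l * (1 - r)) * r + exp (l * (0 - r)) * (1 - r))"
        using r by (simp add: ennreal_mult ennreal_plus)
      also have "\<dots> \<le> ennreal (exp (r * l\<^sup>2))"
        using bern_factor[OF r l] by (rule ennreal_leI)
      finally show ?thesis using True by simp
    next
      case False thus ?thesis using r by (simp add: g_def)
    qed
  qed
  also have "\<dots> = ennreal (exp (r * l\<^sup>2)) ^ card T"
    using T by (simp add: prod.inter_filter[OF A, symmetric] Int_absorb1 Collect_conj_eq Int_commute)
  also have "\<dots> = ennreal (exp (real (card T) * r * l\<^sup>2))"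
    by (simp add: ennreal_power flip: exp_of_nat_mult)
  finally show ?thesis .
qed

lemma emeasure_le_nn_integral_pmf:
  fixes M :: "'a pmf"
  assumes "\<And>x. x \<in> S \<Longrightarrow> 1 \<le> H x"
  shows "emeasure (measure_pmf M) S \<le> (\<integral>\<^sup>+x. H x \<partial>M)"
proof -
  have "emeasure (measure_pmf M) S = (\<integral>\<^sup>+x. indicator S x \<partial>M)" by simp
  also have "\<dots> \<le> (\<integral>\<^sup>+x. H x \<partial>M)"
    by (rule nn_integral_mono) (auto simp: indicator_def assms)
  finally show ?thesis .
qed

lemma prob_le_of_emeasure:
  fixes M :: "'a pmf"
  assumes "emeasure (measure_pmf M) S \<le> ennreal b" "0 \<le> b"
  shows "measure_pmf.prob M S \<le> b"
  using assms by (simp add: measure_pmf.emeasure_eq_measure)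

lemma chernoff_Pi:
  assumes A: "finite A" and T: "T \<subseteq> A" and r: "0 \<le> r" "r \<le> 1" and l: "\<bar>l\<bar> \<le> 1"
    and P: "\<And>f. P f \<Longrightarrow> s \<le> l * (\<Sum>t\<in>T. of_bool (f t) - r)"
  shows "measure_pmf.prob (Pi_pmf A False (\<lambda>_. bernoulli_pmf r)) {f. P f} \<le> exp (real (card T) * r * l\<^sup>2 - s)"
proof (rule prob_le_of_emeasure)
  let ?M = "Pi_pmf A False (\<lambda>_. bernoulli_pmf r)"
  have "emeasure (measure_pmf ?M) {f. P f} \<le>
      (\<integral>\<^sup>+f. ennreal (exp (l * (\<Sum>t\<in>T. of_bool (f t) - r))) * ennreal (exp (- s)) \<partial>?M)"
  proof (rule emeasure_le_nn_integral_pmf)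
    fix f assume "f \<in> {f. P f}"
    hence "s \<le> l * (\<Sum>t\<in>T. of_bool (f t) - r)" using P by auto
    hence "1 \<le> exp (l * (\<Sum>t\<in>T. of_bool (f t) - r)) * exp (- s)"
      by (simp flip: exp_add)
    thus "1 \<le> ennreal (exp (l * (\<Sum>t\<in>T. of_bool (f t) - r))) * ennreal (exp (- s))"
      by (simp flip: ennreal_mult)
  qed
  also have "\<dots> = (\<integral>\<^sup>+f. ennreal (exp (l * (\<Sum>t\<in>T. of_bool (f t) - r))) \<partial>?M) * ennreal (exp (- s))"
    by (rule nn_integral_multc) simp
  also have "\<dots> \<le> ennreal (exp (real (card T) * r * l\<^sup>2)) * ennreal (exp (- s))"
    by (rule mult_right_mono[OF mgf_Pi[OF A T r l]]) simp
  also have "\<dots> = ennreal (exp (real (card T) * r * l\<^sup>2 - s))"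
    by (simp flip: ennreal_mult exp_add)
  finally show "emeasure (measure_pmf ?M) {f. P f} \<le> ennreal (exp (real (card T) * r * l\<^sup>2 - s))" .
qed simp

lemma prob_pair_fst:
  "measure_pmf.prob (pair_pmf A B) {z. P (fst z)} = measure_pmf.prob A {x. P x}"
proof -
  have "measure_pmf.prob A {x. P x} = measure_pmf.prob (map_pmf fst (pair_pmf A B)) {x. P x}"
    by (simp add: map_fst_pair_pmf)
  also have "\<dots> = measure_pmf.prob (pair_pmf A B) {z. P (fst z)}"
    by (simp add: vimage_def)
  finally show ?thesis ..
qed

lemma prob_pair_snd:
  "measure_pmf.prob (pair_pmf A B) {z. P (snd z)} = measure_pmf.prob B {x. P x}"
proof -
  have "measure_pmf.prob B {x. P x} = measure_pmf.prob (map_pmf snd (pair_pmf A B)) {x. P x}"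
    by (simp add: map_snd_pair_pmf)
  also have "\<dots> = measure_pmf.prob (pair_pmf A B) {z. P (snd z)}"
    by (simp add: vimage_def)
  finally show ?thesis ..
qed


lemma R_tail:
  fixes i k K n m :: nat and p q l s M N :: real
  assumes k: "k < K" and p: "0 \<le> p" "p \<le> 1" and l: "\<bar>l\<bar> \<le> 1" and MN: "0 \<le> M" "0 \<le> N"
  shows "measure_pmf.prob (data_pmf n m K p q)
     {z. real (card {l'. l' < K \<and> snd z (l', i)}) \<le> M \<and> real (card {j. j < n \<and> fst z (k, j)}) \<le> N \<and>
         s \<le> l * (\<Sum>l'\<in>{..<K}-{k}. of_bool (snd z (l', i)) *
                (\<Sum>j<n. of_bool (fst z (k, j)) * (of_bool (fst z (l', j)) - p)))}
     \<le> exp (M * N * p * l\<^sup>2 - s)"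
proof (rule prob_le_of_emeasure)
  define PX where "PX = Pi_pmf ({..<K} \<times> {..<n}) False (\<lambda>_. bernoulli_pmf p)"
  define PY where "PY = Pi_pmf ({..<K} \<times> {..<m}) False (\<lambda>_. bernoulli_pmf q)"
  define Rv where "Rv = (\<lambda>(X::nat\<times>nat\<Rightarrow>bool) (Y::nat\<times>nat\<Rightarrow>bool). (\<Sum>l'\<in>{..<K}-{k}. of_bool (Y (l', i)) *
                (\<Sum>j<n. of_bool (X (k, j)) * (of_bool (X (l', j)) - p))))"
  define cnt where "cnt = (\<lambda>Y::nat\<times>nat\<Rightarrow>bool. real (card {l'. l' < K \<and> Y (l', i)}))"
  define rows where "rows = (\<lambda>X::nat\<times>nat\<Rightarrow>bool. real (card {j. j < n \<and> X (k, j)}))"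
  define H where "H = (\<lambda>X Y. if cnt Y \<le> M \<and> rows X \<le> N then ennreal (exp (l * Rv X Y - s)) else 0)"
  define B where "B = exp (M * N * p * l\<^sup>2 - s)"
  define A1 where "A1 = {k} \<times> {..<n}"
  define A2 where "A2 = ({..<K} - {k}) \<times> {..<n}"
  define mg where "mg = (\<lambda>(f::nat\<times>nat\<Rightarrow>bool, g::nat\<times>nat\<Rightarrow>bool) x. if x \<in> A1 then f x else g x)"
  have U: "{..<K} \<times> {..<n} = A1 \<union> A2" using k by (auto simp: A1_def A2_def)
  have PXeq: "PX = map_pmf mg (pair_pmf (Pi_pmf A1 False (\<lambda>_. bernoulli_pmf p)) (Pi_pmf A2 False (\<lambda>_. bernoulli_pmf p)))"
    unfolding PX_def U mg_def by (rule Pi_pmf_union) (auto simp: A1_def A2_def)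
  have inner: "(\<integral>\<^sup>+X. H X Y \<partial>PX) \<le> ennreal B" for Y
  proof -
    have "(\<integral>\<^sup>+X. H X Y \<partial>PX) = (\<integral>\<^sup>+f. \<integral>\<^sup>+g. H (mg (f, g)) Y \<partial>Pi_pmf A2 False (\<lambda>_. bernoulli_pmf p) \<partial>Pi_pmf A1 False (\<lambda>_. bernoulli_pmf p))"
      by (simp add: PXeq nn_integral_pair_pmf')
    also have "\<dots> \<le> (\<integral>\<^sup>+f. ennreal B \<partial>Pi_pmf A1 False (\<lambda>_. bernoulli_pmf p))"
    proof (rule nn_integral_mono)
      fix f
      have rows_eq: "rows (mg (f, g)) = rows f" for g
        unfolding rows_def mg_def A1_def by (rule arg_cong[where f = "\<lambda>S. real (card S)"]) auto
      show "(\<integral>\<^sup>+g. H (mg (f, g)) Y \<partial>Pi_pmf A2 False (\<lambda>_. bernoulli_pmf p)) \<le> ennreal B"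
      proof (cases "cnt Y \<le> M \<and> rows f \<le> N")
        case False
        hence "H (mg (f, g)) Y = 0" for g by (simp add: H_def rows_eq)
        thus ?thesis by simp
      next
        case True
        define S where "S = {l' \<in> {..<K} - {k}. Y (l', i)}"
        define J where "J = {j. j < n \<and> f (k, j)}"
        define T where "T = S \<times> J"
        have TA2: "T \<subseteq> A2" by (auto simp: T_def S_def J_def A2_def)
        have Rv_eq: "Rv (mg (f, g)) Y = (\<Sum>t\<in>T. of_bool (g t) - p)" for g
        proof -
          have "Rv (mg (f, g)) Y = (\<Sum>l'\<in>{..<K}-{k}. \<Sum>j<n. of_bool (Y (l', i) \<and> f (k, j)) * (of_bool (g (l', j)) - p))"
            unfolding Rv_def sum_distrib_left
          proof (intro sum.cong refl)
            fix l' j assume "l' \<in> {..<K} - {k}" "j \<in> {..<n}"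
            thus "of_bool (Y (l', i)) * (of_bool (mg (f, g) (k, j)) * (of_bool (mg (f, g) (l', j)) - p)) =
                  of_bool (Y (l', i) \<and> f (k, j)) * (of_bool (g (l', j)) - p)"
              by (simp add: mg_def A1_def)
          qed
          also have "\<dots> = (\<Sum>t\<in>({..<K}-{k}) \<times> {..<n}. of_bool (Y (fst t, i) \<and> f (k, snd t)) * (of_bool (g t) - p))"
            by (simp only: sum.cartesian_product case_prod_unfold prod.collapse)
          also have "\<dots> = (\<Sum>t\<in>T. of_bool (g t) - p)"
            by (rule sum.mono_neutral_cong_right) (auto simp: T_def S_def J_def)
          finally show ?thesis .
        qed
        have cardT: "real (card T) \<le> M * N"
        proof -
          have "card S \<le> card {l'. l' < K \<and> Y (l', i)}"
            by (rule card_mono) (auto simp: S_def)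
          hence S: "real (card S) \<le> M" using True by (simp add: cnt_def)
          have J: "real (card J) \<le> N" using True by (simp add: rows_def J_def)
          have "real (card T) = real (card S) * real (card J)" by (simp add: T_def card_cartesian_product)
          also have "\<dots> \<le> M * N" using S J by (intro mult_mono) auto
          finally show ?thesis .
        qed
        have "(\<integral>\<^sup>+g. H (mg (f, g)) Y \<partial>Pi_pmf A2 False (\<lambda>_. bernoulli_pmf p))
            = (\<integral>\<^sup>+g. ennreal (exp (l * (\<Sum>t\<in>T. of_bool (g t) - p))) * ennreal (exp (- s)) \<partial>Pi_pmf A2 False (\<lambda>_. bernoulli_pmf p))"
          using True by (simp add: H_def rows_eq Rv_eq flip: ennreal_mult exp_add)
        also have "\<dots> = (\<integral>\<^sup>+g. ennreal (exp (l * (\<Sum>t\<in>T. of_bool (g t) - p))) \<partial>Pi_pmf A2 False (\<lambda>_. bernoulli_pmf p)) * ennreal (exp (- s))"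
          by (rule nn_integral_multc) simp
        also have "\<dots> \<le> ennreal (exp (real (card T) * p * l\<^sup>2)) * ennreal (exp (- s))"
          by (rule mult_right_mono[OF mgf_Pi[OF _ TA2 p l]]) (auto simp: A2_def)
        also have "\<dots> \<le> ennreal B"
        proof -
          have "real (card T) * p * l\<^sup>2 \<le> M * N * p * l\<^sup>2"
            using cardT p by (intro mult_right_mono) auto
          hence "exp (real (card T) * p * l\<^sup>2) * exp (- s) \<le> B"
            by (simp add: B_def flip: exp_add)
          thus ?thesis by (simp add: ennreal_leI flip: ennreal_mult)
        qed
        finally show ?thesis .
      qed
    qed
    also have "\<dots> = ennreal B" by simp
    finally show ?thesis .
  qed
  let ?E = "{z. real (card {l'. l' < K \<and> snd z (l', i)}) \<le> M \<and> real (card {j. j < n \<and> fst z (k, j)}) \<le> N \<and>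
         s \<le> l * (\<Sum>l'\<in>{..<K}-{k}. of_bool (snd z (l', i)) *
                (\<Sum>j<n. of_bool (fst z (k, j)) * (of_bool (fst z (l', j)) - p)))}"
  have "emeasure (measure_pmf (data_pmf n m K p q)) ?E \<le> (\<integral>\<^sup>+z. H (fst z) (snd z) \<partial>data_pmf n m K p q)"
  proof (rule emeasure_le_nn_integral_pmf)
    fix z assume "z \<in> ?E"
    thus "1 \<le> H (fst z) (snd z)"
      by (auto simp: H_def cnt_def rows_def Rv_def)
  qed
  also have "\<dots> = (\<integral>\<^sup>+Y. \<integral>\<^sup>+X. H X Y \<partial>PX \<partial>PY)"
    unfolding data_pmf_def PX_def[symmetric] PY_def[symmetric]
    by (subst pair_commute_pmf) (simp add: nn_integral_pair_pmf' case_prod_unfold)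
  also have "\<dots> \<le> (\<integral>\<^sup>+Y. ennreal B \<partial>PY)"
    by (rule nn_integral_mono) (rule inner)
  also have "\<dots> = ennreal B" by simp
  finally show "emeasure (measure_pmf (data_pmf n m K p q)) ?E \<le> ennreal (exp (M * N * p * l\<^sup>2 - s))"
    by (simp add: B_def)
qed simp


lemma sum_col:
  "(\<Sum>t\<in>{..<K}\<times>{i}. of_bool (Y t) - (q::real)) = real (card {l. l < K \<and> Y (l, i)}) - real K * q"
proof -
  have e: "{..<K}\<times>{i} = (\<lambda>l. (l, i)) ` {..<K}" by auto
  have "(\<Sum>t\<in>{..<K}\<times>{i}. of_bool (Y t) - q) = (\<Sum>l<K. of_bool (Y (l, i)) - q)"
    unfolding e by (subst sum.reindex) (auto simp: inj_on_def)
  also have "\<dots> = real (card ({..<K} \<inter> {l. Y (l, i)})) - real K * q"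
    by (simp add: sum_subtractf)
  also have "{..<K} \<inter> {l. Y (l, i)} = {l. l < K \<and> Y (l, i)}" by auto
  finally show ?thesis .
qed

lemma sum_row:
  "(\<Sum>t\<in>{k}\<times>{..<n}. of_bool (X t) - (p::real)) = real (card {j. j < n \<and> X (k, j)}) - real n * p"
proof -
  have e: "{k}\<times>{..<n} = (\<lambda>j. (k, j)) ` {..<n}" by auto
  have "(\<Sum>t\<in>{k}\<times>{..<n}. of_bool (X t) - p) = (\<Sum>j<n. of_bool (X (k, j)) - p)"
    unfolding e by (subst sum.reindex) (auto simp: inj_on_def)
  also have "\<dots> = real (card ({..<n} \<inter> {j. X (k, j)})) - real n * p"
    by (simp add: sum_subtractf)
  also have "{..<n} \<inter> {j. X (k, j)} = {j. j < n \<and> X (k, j)}" by auto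
  finally show ?thesis .
qed

lemma hebb_split:
  fixes X Y :: "nat \<times> nat \<Rightarrow> bool"
  assumes k: "k < K"
  shows "(\<Sum>j<n. hebb_W K p (\<lambda>k j. X (k, j)) (\<lambda>k i. Y (k, i)) i j * of_bool (X (k, j)))
    = of_bool (Y (k, i)) * (1 - p) * real (card {j. j < n \<and> X (k, j)})
      + (\<Sum>l'\<in>{..<K}-{k}. of_bool (Y (l', i)) * (\<Sum>j<n. of_bool (X (k, j)) * (of_bool (X (l', j)) - p)))"
proof -
  have "(\<Sum>j<n. hebb_W K p (\<lambda>k j. X (k, j)) (\<lambda>k i. Y (k, i)) i j * of_bool (X (k, j)))
      = (\<Sum>l<K. of_bool (Y (l, i)) * (\<Sum>j<n. of_bool (X (k, j)) * (of_bool (X (l, j)) - p)))"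
    unfolding hebb_W_def sum_distrib_right sum_distrib_left
    by (subst sum.swap) (simp add: algebra_simps)
  also have "\<dots> = of_bool (Y (k, i)) * (\<Sum>j<n. of_bool (X (k, j)) * (of_bool (X (k, j)) - p))
      + (\<Sum>l'\<in>{..<K}-{k}. of_bool (Y (l', i)) * (\<Sum>j<n. of_bool (X (k, j)) * (of_bool (X (l', j)) - p)))"
    using k by (subst sum.remove[of _ k]) auto
  also have "(\<Sum>j<n. of_bool (X (k, j)) * (of_bool (X (k, j)) - p)) = (\<Sum>j<n. (1 - p) * of_bool (X (k, j)))"
    by (rule sum.cong) auto
  also have "\<dots> = (1 - p) * real (card {j. j < n \<and> X (k, j)})"
  proof -
    have "{..<n} \<inter> {j. X (k, j)} = {j. j < n \<and> X (k, j)}" by auto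
    thus ?thesis by (simp add: sum_distrib_left[symmetric])
  qed
  finally show ?thesis by (simp add: mult.assoc)
qed


lemma realizes_hebb:
  fixes X Y :: "nat \<times> nat \<Rightarrow> bool"
  assumes key: "\<And>i k. i < m \<Longrightarrow> k < K \<Longrightarrow>
     (Y (k, i) \<longrightarrow> hi \<le> (\<Sum>j<n. hebb_W K p (\<lambda>k j. X (k, j)) (\<lambda>k i. Y (k, i)) i j * of_bool (X (k, j)))) \<and>
     (\<not> Y (k, i) \<longrightarrow> (\<Sum>j<n. hebb_W K p (\<lambda>k j. X (k, j)) (\<lambda>k i. Y (k, i)) i j * of_bool (X (k, j))) \<le> lo)"
    and b: "\<forall>i<m. lo < b i \<and> b i < hi"
  shows "realizes n m K (hebb_W K p (\<lambda>k j. X (k, j)) (\<lambda>k i. Y (k, i))) b (\<lambda>k j. X (k, j)) (\<lambda>k i. Y (k, i))"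
  unfolding realizes_def thr_map_def
proof (intro allI impI)
  fix k i assume k: "k < K" and i: "i < m"
  show "heaviside ((\<Sum>j<n. hebb_W K p (\<lambda>k j. X (k, j)) (\<lambda>k i. Y (k, i)) i j * of_bool (X (k, j))) - b i) = Some (Y (k, i))"
    using key[OF i k] b i by (cases "Y (k, i)") (auto simp: heaviside_def)
qed

lemma main_case:
  fixes n m K :: nat and p q m0 :: real
  assumes p: "0 < p" "p \<le> 1/2" and q: "0 < q" "q < 1" and mm0: "3 * real m < m0" and m1: "1 \<le> m"
    and h1: "real K * q \<ge> 128 * ln m0"
    and h2: "real n * p \<ge> 128 * ln (real K * m0)"
    and h3: "real K * q * ln (real K * m0) \<le> 1/2048 * real n"
  shows "measure_pmf.prob (data_pmf n m K p q)
         {(X, Y). (\<exists>W b. realizes n m K W b (\<lambda>k j. X (k, j)) (\<lambda>k i. Y (k, i))) \<and>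
                  (\<forall>b. (\<forall>i<m. real n * p / 8 < b i \<and> b i < real n * p / 4) \<longrightarrow>
                       realizes n m K (hebb_W K p (\<lambda>k j. X (k, j)) (\<lambda>k i. Y (k, i))) b
                         (\<lambda>k j. X (k, j)) (\<lambda>k i. Y (k, i)))}
       \<ge> 1 - 3 * real m / m0"
proof -
  define D where "D = data_pmf n m K p q"
  define Ev where "Ev = {(X, Y). (\<exists>W b. realizes n m K W b (\<lambda>k j. X (k, j)) (\<lambda>k i. Y (k, i))) \<and>
                  (\<forall>b. (\<forall>i<m. real n * p / 8 < b i \<and> b i < real n * p / 4) \<longrightarrow>
                       realizes n m K (hebb_W K p (\<lambda>k j. X (k, j)) (\<lambda>k i. Y (k, i))) b
                         (\<lambda>k j. X (k, j)) (\<lambda>k i. Y (k, i)))}"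
  have m0: "3 < m0" using mm0 m1 by simp
  have lnm0: "0 < ln m0" using m0 by simp
  have "0 < real K"
  proof (rule ccontr)
    assume "\<not> 0 < real K" hence "real K = 0" by simp
    with h1 lnm0 show False by simp
  qed
  hence K1: "1 \<le> real K" by simp
  define L where "L = ln (real K * m0)"
  have mKm: "m0 \<le> real K * m0" using K1 m0 by simp
  hence Km0: "3 < real K * m0" using m0 by linarith
  from mKm have L0: "ln m0 \<le> L" unfolding L_def using m0 by (subst ln_le_cancel_iff) auto
  have Lpos: "0 < L" using L0 lnm0 by simp
  have np: "128 * L \<le> real n * p" using h2 by (simp add: L_def)
  have npos: "0 < real n"
  proof (rule ccontr)
    assume "\<not> 0 < real n" hence "real n = 0" by simp
    with np Lpos show False by simp
  qed
  have Kqpos: "0 < real K * q" using K1 q by simp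
  have nKq: "2048 * (real K * q) * L \<le> real n" using h3 by (simp add: L_def)
  define e2 where "e2 = exp (- 2 * L)"
  have e2eq: "e2 * (real K * m0)^2 = 1"
  proof -
    have "exp L = real K * m0" unfolding L_def using Km0 by simp
    moreover have "exp (2 * L) = exp L * exp L" by (metis exp_add mult_2)
    ultimately have "exp (2 * L) = (real K * m0)^2" by (simp add: power2_eq_square)
    moreover have "(real K * m0)^2 \<noteq> 0" using K1 m0 by simp
    ultimately show ?thesis by (simp add: e2_def exp_minus)
  qed
  define cntf where "cntf = (\<lambda>(Y::nat\<times>nat\<Rightarrow>bool) i. real (card {l'. l' < K \<and> Y (l', i)}))"
  define rowf where "rowf = (\<lambda>(X::nat\<times>nat\<Rightarrow>bool) k. real (card {j. j < n \<and> X (k, j)}))"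
  define Rvf where "Rvf = (\<lambda>(X::nat\<times>nat\<Rightarrow>bool) (Y::nat\<times>nat\<Rightarrow>bool) i k. \<Sum>l'\<in>{..<K}-{k}. of_bool (Y (l', i)) *
                (\<Sum>j<n. of_bool (X (k, j)) * (of_bool (X (l', j)) - p)))"
  define lam where "lam = (if 64 * (real K * q) * p \<le> 1 then 1 else 1 / (64 * (real K * q) * p))"
  have lam0: "0 < lam" using Kqpos p by (simp add: lam_def)
  have lam1: "lam \<le> 1" using Kqpos p by (auto simp: lam_def)
  have lam2: "64 * (real K * q) * p * lam \<le> 1" using Kqpos p by (auto simp: lam_def)
  have lamexp: "2 * (real K * q) * (2 * (real n * p)) * p * lam\<^sup>2 - lam * (real n * p) / 8 \<le> - 2 * L"
  proof -
    have "2 * (real K * q) * (2 * (real n * p)) * p * lam\<^sup>2 = (64 * (real K * q) * p * lam) * (lam * (real n * p) / 16)"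
      by (simp add: power2_eq_square algebra_simps)
    also have "\<dots> \<le> 1 * (lam * (real n * p) / 16)"
      using lam2 lam0 npos p by (intro mult_right_mono) auto
    finally have 1: "2 * (real K * q) * (2 * (real n * p)) * p * lam\<^sup>2 \<le> lam * (real n * p) / 16" by simp
    have 2: "2 * L \<le> lam * (real n * p) / 16"
    proof (cases "64 * (real K * q) * p \<le> 1")
      case True thus ?thesis using np Lpos by (simp add: lam_def)
    next
      case False
      hence "lam * (real n * p) / 16 = real n / (1024 * (real K * q))" using p Kqpos by (simp add: lam_def field_simps)
      also have "2 * L \<le> real n / (1024 * (real K * q))" using nKq Kqpos by (simp add: field_simps)
      ultimately show ?thesis by (simp add: ac_simps)
    qed
    show ?thesis using 1 2 by simp
  qed
  define NB where "NB = (\<lambda>i. {z::(nat\<times>nat\<Rightarrow>bool)\<times>(nat\<times>nat\<Rightarrow>bool). 2 * (real K * q) \<le> cntf (snd z) i})"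
  define AH where "AH = (\<lambda>k. {z::(nat\<times>nat\<Rightarrow>bool)\<times>(nat\<times>nat\<Rightarrow>bool). 2 * (real n * p) \<le> rowf (fst z) k})"
  define AL where "AL = (\<lambda>k. {z::(nat\<times>nat\<Rightarrow>bool)\<times>(nat\<times>nat\<Rightarrow>bool). rowf (fst z) k \<le> 3 * (real n * p) / 4})"
  define RP where "RP = (\<lambda>i k. {z::(nat\<times>nat\<Rightarrow>bool)\<times>(nat\<times>nat\<Rightarrow>bool). cntf (snd z) i \<le> 2 * (real K * q) \<and>
        rowf (fst z) k \<le> 2 * (real n * p) \<and> lam * (real n * p) / 8 \<le> lam * Rvf (fst z) (snd z) i k})"
  define RM where "RM = (\<lambda>i k. {z::(nat\<times>nat\<Rightarrow>bool)\<times>(nat\<times>nat\<Rightarrow>bool). cntf (snd z) i \<le> 2 * (real K * q) \<and>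
        rowf (fst z) k \<le> 2 * (real n * p) \<and> lam * (real n * p) / 8 \<le> (- lam) * Rvf (fst z) (snd z) i k})"
  have bNB: "measure_pmf.prob D (NB i) \<le> 1 / m0" if i: "i < m" for i
  proof -
    have "measure_pmf.prob D (NB i) = measure_pmf.prob (Pi_pmf ({..<K} \<times> {..<m}) False (\<lambda>_. bernoulli_pmf q))
             {Y. 2 * (real K * q) \<le> cntf Y i}"
      unfolding D_def data_pmf_def NB_def by (rule prob_pair_snd)
    also have "\<dots> \<le> exp (real (card ({..<K} \<times> {i})) * q * (1/2)\<^sup>2 - real K * q / 2)"
    proof (rule chernoff_Pi)
      fix Y assume "2 * (real K * q) \<le> cntf Y i"
      thus "real K * q / 2 \<le> 1 / 2 * (\<Sum>t\<in>{..<K} \<times> {i}. of_bool (Y t) - q)"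
        unfolding sum_col cntf_def by (simp add: field_simps)
    qed (use i q in auto)
    also have "\<dots> = exp (- (real K * q) / 4)" by (simp add: card_cartesian_product power2_eq_square)
    also have "\<dots> \<le> exp (- ln m0)" using h1 lnm0 by simp
    also have "\<dots> = 1 / m0" using m0 by (simp add: exp_minus inverse_eq_divide)
    finally show ?thesis .
  qed
  have bAH: "measure_pmf.prob D (AH k) \<le> e2" if k: "k < K" for k
  proof -
    have "measure_pmf.prob D (AH k) = measure_pmf.prob (Pi_pmf ({..<K} \<times> {..<n}) False (\<lambda>_. bernoulli_pmf p))
             {X. 2 * (real n * p) \<le> rowf X k}"
      unfolding D_def data_pmf_def AH_def by (rule prob_pair_fst)
    also have "\<dots> \<le> exp (real (card ({k} \<times> {..<n})) * p * (1/2)\<^sup>2 - real n * p / 2)"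
    proof (rule chernoff_Pi)
      fix X assume "2 * (real n * p) \<le> rowf X k"
      thus "real n * p / 2 \<le> 1 / 2 * (\<Sum>t\<in>{k} \<times> {..<n}. of_bool (X t) - p)"
        unfolding sum_row rowf_def by (simp add: field_simps)
    qed (use k p in auto)
    also have "\<dots> = exp (- (real n * p) / 4)" by (simp add: card_cartesian_product power2_eq_square)
    also have "\<dots> \<le> e2" using np Lpos by (simp add: e2_def)
    finally show ?thesis .
  qed
  have bAL: "measure_pmf.prob D (AL k) \<le> e2" if k: "k < K" for k
  proof -
    have "measure_pmf.prob D (AL k) = measure_pmf.prob (Pi_pmf ({..<K} \<times> {..<n}) False (\<lambda>_. bernoulli_pmf p))
             {X. rowf X k \<le> 3 * (real n * p) / 4}"
      unfolding D_def data_pmf_def AL_def by (rule prob_pair_fst)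
    also have "\<dots> \<le> exp (real (card ({k} \<times> {..<n})) * p * (-1/8)\<^sup>2 - real n * p / 32)"
    proof (rule chernoff_Pi)
      fix X assume "rowf X k \<le> 3 * (real n * p) / 4"
      thus "real n * p / 32 \<le> -1 / 8 * (\<Sum>t\<in>{k} \<times> {..<n}. of_bool (X t) - p)"
        unfolding sum_row rowf_def by (simp add: field_simps)
    qed (use k p in auto)
    also have "\<dots> = exp (- (real n * p) / 64)" by (simp add: card_cartesian_product power2_eq_square)
    also have "\<dots> \<le> e2" using np Lpos by (simp add: e2_def)
    finally show ?thesis .
  qed
  have bRP: "measure_pmf.prob D (RP i k) \<le> e2" if k: "k < K" for i k
  proof -
    have "measure_pmf.prob D (RP i k) \<le> exp (2 * (real K * q) * (2 * (real n * p)) * p * lam\<^sup>2 - lam * (real n * p) / 8)"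
      unfolding D_def RP_def cntf_def rowf_def Rvf_def
      by (rule R_tail[where M = "2 * (real K * q)" and N = "2 * (real n * p)" and l = lam and s = "lam * (real n * p) / 8"])
         (use k p lam0 lam1 Kqpos npos in auto)
    also have "\<dots> \<le> e2" using lamexp by (simp add: e2_def)
    finally show ?thesis .
  qed
  have bRM: "measure_pmf.prob D (RM i k) \<le> e2" if k: "k < K" for i k
  proof -
    have "measure_pmf.prob D (RM i k) \<le> exp (2 * (real K * q) * (2 * (real n * p)) * p * (- lam)\<^sup>2 - lam * (real n * p) / 8)"
      unfolding D_def RM_def cntf_def rowf_def Rvf_def
      by (rule R_tail[where M = "2 * (real K * q)" and N = "2 * (real n * p)" and l = "- lam" and s = "lam * (real n * p) / 8"])
         (use k p lam0 lam1 Kqpos npos in auto)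
    also have "\<dots> \<le> e2" using lamexp by (simp add: e2_def)
    finally show ?thesis .
  qed
  define Bad where "Bad = (\<Union>i\<in>{..<m}. NB i) \<union> (\<Union>k\<in>{..<K}. AH k \<union> AL k) \<union>
      (\<Union>ik\<in>{..<m}\<times>{..<K}. RP (fst ik) (snd ik) \<union> RM (fst ik) (snd ik))"
  have pU1: "measure_pmf.prob D (\<Union>i\<in>{..<m}. NB i) \<le> real m * (1 / m0)"
  proof -
    have "measure_pmf.prob D (\<Union>i\<in>{..<m}. NB i) \<le> (\<Sum>i\<in>{..<m}. measure_pmf.prob D (NB i))"
      by (rule measure_pmf.finite_measure_subadditive_finite) auto
    also have "\<dots> \<le> (\<Sum>i\<in>{..<m}. 1 / m0)" by (rule sum_mono) (simp add: bNB)
    finally show ?thesis by simp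
  qed
  have pU2: "measure_pmf.prob D (\<Union>k\<in>{..<K}. AH k \<union> AL k) \<le> real K * (2 * e2)"
  proof -
    have "measure_pmf.prob D (\<Union>k\<in>{..<K}. AH k \<union> AL k) \<le> (\<Sum>k\<in>{..<K}. measure_pmf.prob D (AH k \<union> AL k))"
      by (rule measure_pmf.finite_measure_subadditive_finite) auto
    also have "\<dots> \<le> (\<Sum>k\<in>{..<K}. 2 * e2)"
    proof (rule sum_mono)
      fix k assume "k \<in> {..<K}"
      hence "measure_pmf.prob D (AH k) \<le> e2" "measure_pmf.prob D (AL k) \<le> e2" using bAH bAL by auto
      moreover have "measure_pmf.prob D (AH k \<union> AL k) \<le> measure_pmf.prob D (AH k) + measure_pmf.prob D (AL k)"
        by (rule measure_Un_le) auto
      ultimately show "measure_pmf.prob D (AH k \<union> AL k) \<le> 2 * e2" by simp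
    qed
    finally show ?thesis by simp
  qed
  have pU3: "measure_pmf.prob D (\<Union>ik\<in>{..<m}\<times>{..<K}. RP (fst ik) (snd ik) \<union> RM (fst ik) (snd ik)) \<le> real (m * K) * (2 * e2)"
  proof -
    have "measure_pmf.prob D (\<Union>ik\<in>{..<m}\<times>{..<K}. RP (fst ik) (snd ik) \<union> RM (fst ik) (snd ik))
        \<le> (\<Sum>ik\<in>{..<m}\<times>{..<K}. measure_pmf.prob D (RP (fst ik) (snd ik) \<union> RM (fst ik) (snd ik)))"
      by (rule measure_pmf.finite_measure_subadditive_finite) auto
    also have "\<dots> \<le> (\<Sum>ik\<in>{..<m}\<times>{..<K}. 2 * e2)"
    proof (rule sum_mono)
      fix ik assume "ik \<in> {..<m}\<times>{..<K}"
      hence "measure_pmf.prob D (RP (fst ik) (snd ik)) \<le> e2" "measure_pmf.prob D (RM (fst ik) (snd ik)) \<le> e2"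
        using bRP bRM by auto
      moreover have "measure_pmf.prob D (RP (fst ik) (snd ik) \<union> RM (fst ik) (snd ik))
          \<le> measure_pmf.prob D (RP (fst ik) (snd ik)) + measure_pmf.prob D (RM (fst ik) (snd ik))"
        by (rule measure_Un_le) auto
      ultimately show "measure_pmf.prob D (RP (fst ik) (snd ik) \<union> RM (fst ik) (snd ik)) \<le> 2 * e2" by simp
    qed
    finally show ?thesis by (simp add: card_cartesian_product)
  qed
  have pBad: "measure_pmf.prob D Bad \<le> real m * (1 / m0) + real K * (2 * e2) + real (m * K) * (2 * e2)"
  proof -
    have "measure_pmf.prob D Bad \<le> measure_pmf.prob D ((\<Union>i\<in>{..<m}. NB i) \<union> (\<Union>k\<in>{..<K}. AH k \<union> AL k))
        + measure_pmf.prob D (\<Union>ik\<in>{..<m}\<times>{..<K}. RP (fst ik) (snd ik) \<union> RM (fst ik) (snd ik))"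
      unfolding Bad_def by (rule measure_Un_le) auto
    also have "measure_pmf.prob D ((\<Union>i\<in>{..<m}. NB i) \<union> (\<Union>k\<in>{..<K}. AH k \<union> AL k))
        \<le> measure_pmf.prob D (\<Union>i\<in>{..<m}. NB i) + measure_pmf.prob D (\<Union>k\<in>{..<K}. AH k \<union> AL k)"
      by (rule measure_Un_le) auto
    finally show ?thesis using pU1 pU2 pU3 by simp
  qed
  have KE: "2 * real K * e2 \<le> 1 / m0"
  proof -
    define u where "u = real K * e2 * m0"
    have u1: "u * (real K * m0) = 1" using e2eq by (simp add: u_def power2_eq_square algebra_simps)
    have u0: "0 \<le> u" using m0 by (simp add: u_def e2_def)
    have "u \<le> 1 / 3"
    proof (rule ccontr)
      assume "\<not> u \<le> 1 / 3"
      hence "1 / 3 * 3 < u * (real K * m0)" using Km0 by (intro mult_strict_mono) auto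
      thus False using u1 by simp
    qed
    hence "2 * real K * e2 * m0 \<le> 1" by (simp add: u_def)
    thus ?thesis using m0 by (simp add: field_simps)
  qed
  have arith: "real m * (1 / m0) + real K * (2 * e2) + real (m * K) * (2 * e2) \<le> 3 * real m / m0"
  proof -
    have a0: "1 / m0 \<le> real m / m0" using m1 m0 by (intro divide_right_mono) auto
    have a: "real K * (2 * e2) \<le> real m / m0" using order.trans[OF KE a0] by (simp add: ac_simps)
    have b: "real (m * K) * (2 * e2) \<le> real m * (1 / m0)"
      using mult_left_mono[OF KE, of "real m"] by (simp add: algebra_simps)
    have "3 * real m / m0 = real m * (1 / m0) + real m / m0 + real m * (1 / m0)" by (simp add: field_simps)
    thus ?thesis using a b by linarith
  qed
  have incl: "UNIV - Bad \<subseteq> Ev"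
  proof
    fix z assume z: "z \<in> UNIV - Bad"
    obtain X Y where zXY: "z = (X, Y)" by (cases z)
    have key: "(Y (k, i) \<longrightarrow> real n * p / 4 \<le> (\<Sum>j<n. hebb_W K p (\<lambda>k j. X (k, j)) (\<lambda>k i. Y (k, i)) i j * of_bool (X (k, j)))) \<and>
     (\<not> Y (k, i) \<longrightarrow> (\<Sum>j<n. hebb_W K p (\<lambda>k j. X (k, j)) (\<lambda>k i. Y (k, i)) i j * of_bool (X (k, j))) \<le> real n * p / 8)"
      if i: "i < m" and k: "k < K" for i k
    proof -
      have nb: "z \<notin> NB i" "z \<notin> AH k" "z \<notin> AL k" "z \<notin> RP i k" "z \<notin> RM i k"
        using z i k unfolding Bad_def by auto
      have c1: "cntf Y i < 2 * (real K * q)" using nb(1) by (simp add: NB_def zXY)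
      have r1: "3 * (real n * p) / 4 < rowf X k" using nb(3) by (simp add: AL_def zXY)
      have r2: "rowf X k < 2 * (real n * p)" using nb(2) by (simp add: AH_def zXY)
      define R where "R = Rvf X Y i k"
      have "\<not> lam * (real n * p) / 8 \<le> lam * R" using nb(4) c1 r2 by (simp add: RP_def zXY R_def)
      hence "lam * R < lam * (real n * p / 8)" by simp
      hence Rp: "R < real n * p / 8" using mult_less_cancel_left_pos[OF lam0] by blast
      have "\<not> lam * (real n * p) / 8 \<le> (- lam) * R" using nb(5) c1 r2 by (simp add: RM_def zXY R_def)
      hence "lam * (- R) < lam * (real n * p / 8)" by simp
      hence Rm: "- R < real n * p / 8" using mult_less_cancel_left_pos[OF lam0] by blast
      have V: "(\<Sum>j<n. hebb_W K p (\<lambda>k j. X (k, j)) (\<lambda>k i. Y (k, i)) i j * of_bool (X (k, j)))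
          = of_bool (Y (k, i)) * (1 - p) * rowf X k + R"
        unfolding R_def Rvf_def rowf_def by (rule hebb_split[OF k])
      have half: "rowf X k / 2 \<le> (1 - p) * rowf X k"
      proof -
        have "1/2 * rowf X k \<le> (1 - p) * rowf X k"
          using p by (intro mult_right_mono) (auto simp: rowf_def)
        thus ?thesis by simp
      qed
      show ?thesis
      proof (intro conjI impI)
        assume "Y (k, i)"
        hence "(\<Sum>j<n. hebb_W K p (\<lambda>k j. X (k, j)) (\<lambda>k i. Y (k, i)) i j * of_bool (X (k, j)))
          = (1 - p) * rowf X k + R" by (simp only: V) simp
        thus "real n * p / 4 \<le> (\<Sum>j<n. hebb_W K p (\<lambda>k j. X (k, j)) (\<lambda>k i. Y (k, i)) i j * of_bool (X (k, j)))"
          using half Rm r1 by linarith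
      next
        assume "\<not> Y (k, i)"
        hence "(\<Sum>j<n. hebb_W K p (\<lambda>k j. X (k, j)) (\<lambda>k i. Y (k, i)) i j * of_bool (X (k, j))) = R"
          by (simp only: V) simp
        thus "(\<Sum>j<n. hebb_W K p (\<lambda>k j. X (k, j)) (\<lambda>k i. Y (k, i)) i j * of_bool (X (k, j))) \<le> real n * p / 8"
          using Rp by linarith
      qed
    qed
    have np0: "0 < real n * p" using npos p by simp
    show "z \<in> Ev"
      unfolding Ev_def zXY
    proof (clarify, intro conjI allI impI)
      show "\<exists>W b. realizes n m K W b (\<lambda>k j. X (k, j)) (\<lambda>k i. Y (k, i))"
      proof (intro exI)
        show "realizes n m K (hebb_W K p (\<lambda>k j. X (k, j)) (\<lambda>k i. Y (k, i))) (\<lambda>_. 3 * (real n * p) / 16)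
            (\<lambda>k j. X (k, j)) (\<lambda>k i. Y (k, i))"
          by (rule realizes_hebb[where lo = "real n * p / 8" and hi = "real n * p / 4"])
             (use key np0 in \<open>auto simp: ac_simps\<close>)
      qed
    next
      fix b :: "nat \<Rightarrow> real" assume "\<forall>i<m. real n * p / 8 < b i \<and> b i < real n * p / 4"
      thus "realizes n m K (hebb_W K p (\<lambda>k j. X (k, j)) (\<lambda>k i. Y (k, i))) b (\<lambda>k j. X (k, j)) (\<lambda>k i. Y (k, i))"
        by (intro realizes_hebb[where lo = "real n * p / 8" and hi = "real n * p / 4"]) (use key in auto)
    qed
  qed
  have "1 - 3 * real m / m0 \<le> 1 - measure_pmf.prob D Bad" using pBad arith by simp
  also have "\<dots> = measure_pmf.prob D (UNIV - Bad)"
    using measure_pmf.prob_compl[of Bad D] by simp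
  also have "\<dots> \<le> measure_pmf.prob D Ev"
    by (rule measure_pmf.finite_measure_mono[OF incl]) simp
  finally show ?thesis by (simp add: D_def Ev_def)
qed

theorem theorem7p2:
  shows "\<exists>C c :: real. C > 0 \<and> c > 0 \<and>
    (\<forall>(n::nat) (m::nat) (K::nat) (p::real) (q::real) (m0::real).
       0 < p \<and> p \<le> 1/2 \<and> 0 < q \<and> q < 1 \<and> real m \<le> m0 \<and>
       real K * q \<ge> C * ln m0 \<and>
       real n * p \<ge> C * ln (real K * m0) \<and>
       real K * q * ln (real K * m0) \<le> c * real n
       \<longrightarrow>
       measure_pmf.prob (data_pmf n m K p q)
         {(X, Y). (\<exists>W b. realizes n m K W b (\<lambda>k j. X (k, j)) (\<lambda>k i. Y (k, i))) \<and>
                  (\<forall>b. (\<forall>i<m. real n * p / 8 < b i \<and> b i < real n * p / 4) \<longrightarrow>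
                       realizes n m K (hebb_W K p (\<lambda>k j. X (k, j)) (\<lambda>k i. Y (k, i))) b
                         (\<lambda>k j. X (k, j)) (\<lambda>k i. Y (k, i)))}
       \<ge> 1 - 3 * real m / m0)"
proof (intro exI conjI allI impI)
  show "(128::real) > 0" by simp
  show "(1/2048::real) > 0" by simp
  fix n m K :: nat and p q m0 :: real
  assume H: "0 < p \<and> p \<le> 1/2 \<and> 0 < q \<and> q < 1 \<and> real m \<le> m0 \<and>
       real K * q \<ge> 128 * ln m0 \<and>
       real n * p \<ge> 128 * ln (real K * m0) \<and>
       real K * q * ln (real K * m0) \<le> 1/2048 * real n"
  show "measure_pmf.prob (data_pmf n m K p q)
         {(X, Y). (\<exists>W b. realizes n m K W b (\<lambda>k j. X (k, j)) (\<lambda>k i. Y (k, i))) \<and>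
                  (\<forall>b. (\<forall>i<m. real n * p / 8 < b i \<and> b i < real n * p / 4) \<longrightarrow>
                       realizes n m K (hebb_W K p (\<lambda>k j. X (k, j)) (\<lambda>k i. Y (k, i))) b
                         (\<lambda>k j. X (k, j)) (\<lambda>k i. Y (k, i)))}
       \<ge> 1 - 3 * real m / m0"
  proof (cases "m = 0")
    case True
    have "{(X, Y). (\<exists>W b. realizes n m K W b (\<lambda>k j. X (k, j)) (\<lambda>k i. Y (k, i))) \<and>
                  (\<forall>b. (\<forall>i<m. real n * p / 8 < b i \<and> b i < real n * p / 4) \<longrightarrow>
                       realizes n m K (hebb_W K p (\<lambda>k j. X (k, j)) (\<lambda>k i. Y (k, i))) b
                         (\<lambda>k j. X (k, j)) (\<lambda>k i. Y (k, i)))} = UNIV"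
      using True by (auto simp: realizes_def)
    thus ?thesis using True by simp
  next
    case False
    show ?thesis
    proof (cases "m0 \<le> 3 * real m")
      case True
      have "0 < m0" using H False by (smt (verit) of_nat_0_less_iff neq0_conv)
      hence "1 \<le> 3 * real m / m0" using True by simp
      hence "1 - 3 * real m / m0 \<le> 0" by simp
      thus ?thesis by (smt (verit) measure_nonneg)
    next
      case m0: False
      show ?thesis
        by (rule main_case) (use H False m0 in auto)
    qed
  qed
qed

end
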